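(* Let $P$ be a finite set of points in $\mathbb{R}^2$ in general position and let $(t,u,v)$ be consecutive vertices of the first convex layer $L^1$ of $P$. If $u$ is deleted from $P$, then among the vertices of $L^1$ (other than $u$), only the sensitivities of $t$ and $v$ change.
   Context: $L^1$ is the set of vertices of the convex hull of $P$. The sensitivity of a point $p\in P$ is the amount by which the area of the convex hull of $P$ decreases when $p$ is removed from $P$. *)

theory Defs
  imports "HOL-Analysis.Analysis"
begin

definition general_position :: "(real^2) set \<Rightarrow> bool" where
  "general_position P \<longleftrightarrow>
     (\<forall>a\<in>P. \<forall>b\<in>P. \<forall>c\<in>P. a \<noteq> b \<and> a \<noteq> c \<and> b \<noteq> c \<longrightarrow> \<not> collinear {a, b, c})"

definition layer1 :: "(real^2) set \<Rightarrow> (real^2) set" where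
  "layer1 P = {p \<in> P. p extreme_point_of (convex hull P)}"

definition hull_area :: "(real^2) set \<Rightarrow> real" where
  "hull_area P = measure lebesgue (convex hull P)"

definition sensitivity :: "(real^2) set \<Rightarrow> real^2 \<Rightarrow> real" where
  "sensitivity P p = hull_area P - hull_area (P - {p})"

definition consecutive_vertices :: "(real^2) set \<Rightarrow> real^2 \<Rightarrow> real^2 \<Rightarrow> real^2 \<Rightarrow> bool" where
  "consecutive_vertices P t u v \<longleftrightarrow>
     t \<in> layer1 P \<and> u \<in> layer1 P \<and> v \<in> layer1 P \<and>
     t \<noteq> u \<and> u \<noteq> v \<and> t \<noteq> v \<and>
     closed_segment t u face_of convex hull P \<and>
     closed_segment u v face_of convex hull P"

end

theory Submission
  imports Defs
begin

lemma perp2: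
  fixes a c r d :: "real^2"
  assumes "a \<bullet> r = 0" "c \<bullet> r = 0" "a \<bullet> d = 0" "c \<bullet> d \<noteq> 0" "a \<noteq> 0"
  shows "r = 0"
proof (rule ccontr)
  assume rn: "r \<noteq> 0"
  have e: "a$1*r$1 + a$2*r$2 = 0" "c$1*r$1 + c$2*r$2 = 0" "a$1*d$1 + a$2*d$2 = 0"
      "c$1*d$1 + c$2*d$2 \<noteq> 0"
    using assms by (simp_all add: inner_vec_def sum_2)
  have an: "a$1 \<noteq> 0 \<or> a$2 \<noteq> 0" using assms(5) by (metis exhaust_2 vec_eq_iff zero_index)
  have rn2: "r$1 \<noteq> 0 \<or> r$2 \<noteq> 0" using rn by (metis exhaust_2 vec_eq_iff zero_index)
  have "a$1*(d$1*r$2 - d$2*r$1) = 0" using e by algebra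
  moreover have "a$2*(d$1*r$2 - d$2*r$1) = 0" using e by algebra
  ultimately have det: "d$1*r$2 - d$2*r$1 = 0" using an by auto
  have "(c$1*d$1 + c$2*d$2) * r$1 = 0" using e det by algebra
  moreover have "(c$1*d$1 + c$2*d$2) * r$2 = 0" using e det by algebra
  ultimately show False using e(4) rn2 by auto
qed
lemma cross:
  fixes t u v w a a2 :: "real^2"
  assumes "a \<bullet> t = b" "a \<bullet> u = b" "a \<bullet> v < b" "a \<bullet> w < b"
    "a2 \<bullet> u = b2" "a2 \<bullet> v = b2" "a2 \<bullet> t < b2" "a2 \<bullet> w < b2"
    "w \<notin> convex hull {t,u,v}"
  shows "\<exists>m l. m \<in> convex hull {t,v} \<and> 0 < l \<and> l < 1 \<and> m = l *\<^sub>R u + (1-l) *\<^sub>R w"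
proof -
  define al where "al = (a2 \<bullet> w - b2) / (a2 \<bullet> t - b2)"
  define c where "c = (a \<bullet> w - b) / (a \<bullet> v - b)"
  have al0: "al > 0" using assms unfolding al_def by (simp add: divide_neg_neg)
  have c0: "c > 0" using assms unfolding c_def by (simp add: divide_neg_neg)
  define r where "r = w - u - al *\<^sub>R (t - u) - c *\<^sub>R (v - u)"
  have "a \<bullet> r = (a \<bullet> w - b) - c * (a \<bullet> v - b)" using assms unfolding r_def by (simp add: inner_diff_right algebra_simps)
  also have "\<dots> = 0" unfolding c_def using assms by simp
  finally have "a \<bullet> r = 0" .
  moreover have "a2 \<bullet> r = 0"
  proof -
    have "a2 \<bullet> r = (a2 \<bullet> w - b2) - al * (a2 \<bullet> t - b2)" using assms unfolding r_def by (simp add: inner_diff_right algebra_simps)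
    also have "\<dots> = 0" unfolding al_def using assms by simp
    finally show ?thesis .
  qed
  moreover have "a \<bullet> (t - u) = 0" using assms by (simp add: inner_diff_right)
  moreover have "a2 \<bullet> (t - u) \<noteq> 0" using assms by (simp add: inner_diff_right)
  moreover have "a \<noteq> 0" using assms by auto
  ultimately have "r = 0" by (rule perp2)
  hence wr: "w = u + al *\<^sub>R (t - u) + c *\<^sub>R (v - u)" unfolding r_def by (simp add: algebra_simps)
  have s1: "al + c > 1"
  proof (rule ccontr)
    assume "\<not> al + c > 1"
    hence "w = al *\<^sub>R t + (1 - al - c) *\<^sub>R u + c *\<^sub>R v" "0 \<le> 1 - al - c" using wr by (auto simp: algebra_simps)
    hence "w \<in> convex hull {t,u,v}" unfolding convex_hull_3 using al0 c0
      by (smt (verit, best) mem_Collect_eq)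
    thus False using assms(9) by blast
  qed
  define m where "m = (al/(al+c)) *\<^sub>R t + (c/(al+c)) *\<^sub>R v"
  define l where "l = 1 - 1/(al+c)"
  have h: "0 \<le> al/(al+c)" "0 \<le> c/(al+c)" "al/(al+c)+c/(al+c)=1" using al0 c0
    by (simp_all add: add_divide_distrib[symmetric])
  have "m \<in> convex hull {t,v}" unfolding convex_hull_2 m_def using h by blast
  moreover have "0 < l" "l < 1" unfolding l_def using s1 by (auto simp: field_simps)
  moreover have "m = l *\<^sub>R u + (1-l) *\<^sub>R w"
  proof -
    have "l *\<^sub>R u + (1-l) *\<^sub>R w = u + (1/(al+c)) *\<^sub>R (al *\<^sub>R (t - u) + c *\<^sub>R (v - u))"
      unfolding l_def wr by (simp add: algebra_simps)
    also have "\<dots> = m" unfolding m_def using al0 c0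
      by (simp add: algebra_simps scaleR_add_left[symmetric] del: scaleR_add_left)
    finally show ?thesis by simp
  qed
  ultimately show ?thesis by blast
qed
lemma inter:
  fixes Q :: "(real^2) set"
  assumes "finite Q" "m \<in> convex hull Q" "m \<in> convex hull {u,w}"
  shows "convex hull (insert u Q) \<inter> convex hull (insert w Q) \<subseteq> convex hull Q"
proof
  fix x assume x: "x \<in> convex hull (insert u Q) \<inter> convex hull (insert w Q)"
  show "x \<in> convex hull Q"
  proof (rule ccontr)
    assume nx: "x \<notin> convex hull Q"
    have "closed (convex hull Q)" using assms(1) by (simp add: compact_imp_closed finite_imp_compact_convex_hull)
    then obtain a b where ab: "a \<bullet> x < b" "\<forall>y\<in>convex hull Q. a \<bullet> y > b"
      using separating_hyperplane_closed_point[OF convex_convex_hull _ nx] by blast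
    have Qs: "Q \<subseteq> {y. b \<le> a \<bullet> y}" using ab(2) hull_subset by fastforce
    have "a \<bullet> u < b"
    proof (rule ccontr)
      assume "\<not> a \<bullet> u < b"
      hence "insert u Q \<subseteq> {y. b \<le> a \<bullet> y}" using Qs by auto
      hence "convex hull (insert u Q) \<subseteq> {y. b \<le> a \<bullet> y}"
        by (intro hull_minimal) (auto simp: convex_halfspace_ge)
      thus False using x ab(1) by auto
    qed
    moreover have "a \<bullet> w < b"
    proof (rule ccontr)
      assume "\<not> a \<bullet> w < b"
      hence "insert w Q \<subseteq> {y. b \<le> a \<bullet> y}" using Qs by auto
      hence "convex hull (insert w Q) \<subseteq> {y. b \<le> a \<bullet> y}"
        by (intro hull_minimal) (auto simp: convex_halfspace_ge)
      thus False using x ab(1) by auto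
    qed
    ultimately have "{u,w} \<subseteq> {y. a \<bullet> y < b}" by auto
    hence "convex hull {u,w} \<subseteq> {y. a \<bullet> y < b}"
      by (intro hull_minimal) (auto simp: convex_halfspace_lt)
    hence "a \<bullet> m < b" using assms(3) by auto
    thus False using ab(2) assms(2) by force
  qed
qed

lemma union:
  fixes Q :: "(real^2) set"
  assumes "Q \<noteq> {}" "m \<in> convex hull Q" "0 < l" "l < 1" "m = l *\<^sub>R u + (1-l) *\<^sub>R w"
  shows "convex hull (insert u (insert w Q)) \<subseteq> convex hull (insert u Q) \<union> convex hull (insert w Q)"
proof
  fix x assume "x \<in> convex hull (insert u (insert w Q))"
  then obtain s r y where sr: "0 \<le> s" "0 \<le> r" "s + r = 1" "y \<in> convex hull (insert w Q)" "x = s *\<^sub>R u + r *\<^sub>R y"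
    unfolding convex_hull_insert[OF insert_not_empty] by blast
  then obtain s' r' z where sr': "0 \<le> s'" "0 \<le> r'" "s' + r' = 1" "z \<in> convex hull Q" "y = s' *\<^sub>R w + r' *\<^sub>R z"
    unfolding convex_hull_insert[OF assms(1)] by blast
  define al where "al = s" 
  define be where "be = r * s'"
  define ga where "ga = r * r'"
  have co: "0 \<le> al" "0 \<le> be" "0 \<le> ga" "al + be + ga = 1"
  proof -
    have "be + ga = r" unfolding be_def ga_def by (simp add: distrib_left[symmetric] sr'(3))
    thus "0 \<le> al" "0 \<le> be" "0 \<le> ga" "al + be + ga = 1" unfolding al_def be_def ga_def using sr sr' by auto
  qed
  have xe: "x = al *\<^sub>R u + be *\<^sub>R w + ga *\<^sub>R z" unfolding al_def be_def ga_def sr(5) sr'(5) by (simp add: algebra_simps)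
  have zQ: "z \<in> convex hull (insert u Q)" "z \<in> convex hull (insert w Q)"
    using sr'(4) hull_mono[of Q "insert u Q"] hull_mono[of Q "insert w Q"] by auto
  have mQ: "m \<in> convex hull (insert u Q)" "m \<in> convex hull (insert w Q)"
    using assms(2) hull_mono[of Q "insert u Q"] hull_mono[of Q "insert w Q"] by auto
  have uQ: "u \<in> convex hull (insert u Q)" and wQ: "w \<in> convex hull (insert w Q)"
    by (simp_all add: hull_inc)
  show "x \<in> convex hull (insert u Q) \<union> convex hull (insert w Q)"
  proof (cases "al * (1 - l) \<ge> be * l")
    case True
    define mu where "mu = be / (1 - l)"
    have e: "mu * (1 - l) = be" unfolding mu_def using assms(4) by simp
    have "mu *\<^sub>R m + (al - mu * l) *\<^sub>R u + ga *\<^sub>R z = (mu*l) *\<^sub>R u + (mu*(1-l)) *\<^sub>R w + (al - mu * l) *\<^sub>R u + ga *\<^sub>R z"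
      unfolding assms(5) by (simp only: scaleR_add_right scaleR_scaleR)
    also have "\<dots> = (mu*l) *\<^sub>R u + be *\<^sub>R w + (al - mu * l) *\<^sub>R u + ga *\<^sub>R z" by (simp only: e)
    also have "\<dots> = x" unfolding xe by (simp add: algebra_simps)
    finally have "x = mu *\<^sub>R m + (al - mu * l) *\<^sub>R u + ga *\<^sub>R z" ..
    moreover have "0 \<le> mu" using co assms(4) unfolding mu_def by simp
    moreover have "mu * l \<le> al" unfolding mu_def using assms(4) True by (simp add: pos_divide_le_eq mult.commute)
    moreover have "mu + (al - mu * l) + ga = 1" using e co by (simp add: algebra_simps)
    moreover note e
    ultimately have "x \<in> convex hull {m, u, z}" unfolding convex_hull_3 using co
      by (smt (verit) mem_Collect_eq)
    moreover have "convex hull {m,u,z} \<subseteq> convex hull (insert u Q)"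
      using mQ uQ zQ by (intro hull_minimal) auto
    ultimately show ?thesis by blast
  next
    case False
    define mu where "mu = al / l"
    have e: "mu * l = al" unfolding mu_def using assms(3) by simp
    have "mu *\<^sub>R m + (be - mu * (1 - l)) *\<^sub>R w + ga *\<^sub>R z = (mu*l) *\<^sub>R u + (mu*(1-l)) *\<^sub>R w + (be - mu * (1 - l)) *\<^sub>R w + ga *\<^sub>R z"
      unfolding assms(5) by (simp only: scaleR_add_right scaleR_scaleR)
    also have "\<dots> = al *\<^sub>R u + (mu*(1-l)) *\<^sub>R w + (be - mu * (1 - l)) *\<^sub>R w + ga *\<^sub>R z" by (simp only: e)
    also have "\<dots> = x" unfolding xe by (simp add: algebra_simps)
    finally have "x = mu *\<^sub>R m + (be - mu * (1 - l)) *\<^sub>R w + ga *\<^sub>R z" ..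
    moreover have "0 \<le> mu" using co assms(3) unfolding mu_def by simp
    moreover have "mu * (1-l) \<le> be" unfolding mu_def using assms(3) False
      by (simp add: mult.commute pos_divide_le_eq)
    moreover have "mu + (be - mu * (1 - l)) + ga = 1" using e co by (simp add: algebra_simps)
    ultimately have "x \<in> convex hull {m, w, z}" unfolding convex_hull_3 using co
      by (smt (verit) mem_Collect_eq)
    moreover have "convex hull {m,w,z} \<subseteq> convex hull (insert w Q)"
      using mQ wQ zQ by (intro hull_minimal) auto
    ultimately show ?thesis by blast
  qed
qed

lemma edge:
  fixes P :: "(real^2) set"
  assumes "finite P" "general_position P" "t \<in> P" "u \<in> P" "t \<noteq> u"
    "closed_segment t u face_of convex hull P" "v \<in> P" "v \<noteq> t" "v \<noteq> u"
  shows "\<exists>a b. a \<bullet> t = b \<and> a \<bullet> u = b \<and> (\<forall>p\<in>P-{t,u}. a \<bullet> p < b)"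
proof -
  have "polyhedron (convex hull P)" by (simp add: polytope_imp_polyhedron polytope_convex_hull assms(1))
  hence ex: "closed_segment t u exposed_face_of convex hull P"
    using exposed_face_of_polyhedron assms(6) by blast
  have col: "p = t \<or> p = u" if "p \<in> closed_segment t u" "p \<in> P" for p
  proof (rule ccontr)
    assume "\<not> (p = t \<or> p = u)"
    moreover have "collinear {t,u,p}"
      by (rule collinear_subset[OF collinear_closed_segment[of t u]]) (use that(1) in auto)
    moreover have gp: "\<And>a b c. a\<in>P \<Longrightarrow> b\<in>P \<Longrightarrow> c\<in>P \<Longrightarrow> a\<noteq>b \<Longrightarrow> a\<noteq>c \<Longrightarrow> b\<noteq>c \<Longrightarrow> \<not> collinear {a,b,c}"
      using assms(2) unfolding general_position_def by blast
    ultimately show False using gp[of t u p] assms(3,4,5) that(2) by blast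
  qed
  have "closed_segment t u = {} \<or> closed_segment t u = convex hull P \<or>
      (\<exists>a b. a \<noteq> 0 \<and> convex hull P \<subseteq> {x. a \<bullet> x \<le> b} \<and> closed_segment t u = convex hull P \<inter> {x. a \<bullet> x = b})"
    using ex unfolding exposed_face_of by (rule conjunct2)
  then consider "closed_segment t u = {}" | "closed_segment t u = convex hull P"
    | a b where "a \<noteq> 0" "convex hull P \<subseteq> {x. a \<bullet> x \<le> b}" "closed_segment t u = convex hull P \<inter> {x. a \<bullet> x = b}"
    by blast
  then show ?thesis
  proof cases
    case 1 thus ?thesis by simp
  next
    case 2
    hence "v \<in> closed_segment t u" using assms(7) by (simp add: hull_inc)
    thus ?thesis using col assms(7,8,9) by blast
  next
    case (3 a b)
    have "t \<in> closed_segment t u" "u \<in> closed_segment t u" by auto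
    hence ab: "a \<bullet> t = b" "a \<bullet> u = b" using 3(3) by auto
    have "\<forall>p\<in>P-{t,u}. a \<bullet> p < b"
    proof
      fix p assume p: "p \<in> P - {t,u}"
      hence ph: "p \<in> convex hull P" by (simp add: hull_inc)
      hence "a \<bullet> p \<le> b" using 3(2) by auto
      moreover have "a \<bullet> p \<noteq> b"
      proof
        assume "a \<bullet> p = b"
        hence "p \<in> closed_segment t u" using 3(3) ph by auto
        thus False using col p by blast
      qed
      ultimately show "a \<bullet> p < b" by simp
    qed
    thus ?thesis using ab by blast
  qed
qed


theorem lemma1:
  fixes P :: "(real^2) set" and t u v :: "real^2"
  assumes "finite P"
    and "general_position P"
    and "consecutive_vertices P t u v"
  shows "\<forall>w \<in> layer1 P - {u, t, v}. sensitivity (P - {u}) w = sensitivity P w"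
proof
  fix w assume w: "w \<in> layer1 P - {u, t, v}"
  have cv: "t \<in> P" "u \<in> P" "v \<in> P" "t \<noteq> u" "u \<noteq> v" "t \<noteq> v"
    "closed_segment t u face_of convex hull P" "closed_segment u v face_of convex hull P"
    using assms(3) unfolding consecutive_vertices_def layer1_def by auto
  have wP: "w \<in> P" "w extreme_point_of convex hull P" "w \<noteq> u" "w \<noteq> t" "w \<noteq> v"
    using w unfolding layer1_def by auto
  obtain a b where ab: "a \<bullet> t = b" "a \<bullet> u = b" "\<forall>p\<in>P-{t,u}. a \<bullet> p < b"
    using edge[OF assms(1,2) cv(1,2,4,7,3)] cv by auto
  obtain a2 b2 where ab2: "a2 \<bullet> u = b2" "a2 \<bullet> v = b2" "\<forall>p\<in>P-{u,v}. a2 \<bullet> p < b2"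
    using edge[OF assms(1,2) cv(2,3,5,8,1)] cv by auto
  have "convex (convex hull P - {w})" using wP(2) extreme_point_of_stillconvex[of "convex hull P"] by simp
  moreover have "{t,u,v} \<subseteq> convex hull P - {w}" using cv wP by (auto simp: hull_inc)
  ultimately have "convex hull {t,u,v} \<subseteq> convex hull P - {w}" by (intro hull_minimal) auto
  hence wn: "w \<notin> convex hull {t,u,v}" by blast
  have "v \<in> P - {t,u}" "w \<in> P - {t,u}" "t \<in> P - {u,v}" "w \<in> P - {u,v}" using cv wP by auto
  hence "a \<bullet> v < b" "a \<bullet> w < b" "a2 \<bullet> t < b2" "a2 \<bullet> w < b2" using ab(3) ab2(3) by blast+
  then obtain m l where ml: "m \<in> convex hull {t,v}" "0 < l" "l < 1" "m = l *\<^sub>R u + (1-l) *\<^sub>R w"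
    using cross[of a t b u v w a2 b2, OF ab(1,2) _ _ ab2(1,2) _ _ wn] by blast
  define Q where "Q = P - {u,w}"
  have fQ: "finite Q" using assms(1) by (simp add: Q_def)
  have tvQ: "t \<in> Q" "v \<in> Q" using cv wP by (auto simp: Q_def)
  have mQ: "m \<in> convex hull Q" using ml(1) tvQ hull_mono[of "{t,v}" Q] by auto
  have "0 \<le> l" "0 \<le> 1 - l" "l + (1 - l) = 1" using ml(2,3) by auto
  hence muw: "m \<in> convex hull {u,w}" unfolding convex_hull_2 using ml(4) by blast
  let ?A = "convex hull (insert u Q)" and ?B = "convex hull (insert w Q)"
  have "convex hull Q \<subseteq> ?A" "convex hull Q \<subseteq> ?B" by (rule hull_mono, blast)+
  hence I: "?A \<inter> ?B = convex hull Q"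
    using inter[OF fQ mQ muw] by auto
  have U: "convex hull (insert u (insert w Q)) = ?A \<union> ?B"
  proof -
    have "?A \<subseteq> convex hull (insert u (insert w Q))" "?B \<subseteq> convex hull (insert u (insert w Q))"
      by (rule hull_mono, blast)+
    moreover have "Q \<noteq> {}" using tvQ by auto
    ultimately show ?thesis using union[OF _ mQ ml(2,3,4)] by (intro subset_antisym) auto
  qed
  have e1: "P - {w} = insert u Q" "P - {u} = insert w Q" "P = insert u (insert w Q)" "P - {u} - {w} = Q"
    using cv wP by (auto simp: Q_def)
  have mA: "?A \<in> lmeasurable" using fQ by (simp add: lmeasurable_compact finite_imp_compact_convex_hull)
  have mB: "?B \<in> lmeasurable" using fQ by (simp add: lmeasurable_compact finite_imp_compact_convex_hull)
  have h1: "hull_area P = measure lebesgue (?A \<union> ?B)" by (subst e1(3)) (simp only: hull_area_def U)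
  have h2: "hull_area (P - {w}) = measure lebesgue ?A" by (simp only: hull_area_def e1(1))
  have h3: "hull_area (P - {u}) = measure lebesgue ?B" by (simp only: hull_area_def e1(2))
  have h4: "hull_area (P - {u} - {w}) = measure lebesgue (convex hull Q)" by (simp only: hull_area_def e1(4))
  have "sensitivity P w = measure lebesgue (?A \<union> ?B) - measure lebesgue ?A"
    unfolding sensitivity_def h1 h2 ..
  also have "\<dots> = measure lebesgue ?B - measure lebesgue (convex hull Q)"
    using measure_Un3[OF mA mB] I by simp
  also have "\<dots> = sensitivity (P - {u}) w"
    unfolding sensitivity_def h3 h4 ..
  finally show "sensitivity (P - {u}) w = sensitivity P w" by simp
qed

end
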